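(* For every integer $p\ge 3$, $${\rm gp}(S_p^2)=\begin{cases}\frac{(p+1)^2}{4}, & p\text{ odd},\\ \frac{p(p+2)}{4}, & p\text{ even},\end{cases}\qquad \#{\rm gp}(S_p^2)=\begin{cases}\binom{p}{(p+1)/2}, & p\text{ odd},\\ \binom{p+1}{(p+2)/2}, & p\text{ even}.\end{cases}$$
   Context: For $p\ge3$, $n\ge1$, the Sierpiński graph $S_p^n$ has vertex set $\{0,1,\dots,p-1\}^n$, a vertex written $i_1\cdots i_n$; vertices $i_1\cdots i_n$ and $j_1\cdots j_n$ are adjacent iff there is $h$ with $i_t=j_t$ for $t<h$, $i_h\ne j_h$, and $i_t=j_h$, $j_t=i_h$ for $t>h$. For $X\subseteq V(G)$, vertices $u,v$ are $X$-positionable if every shortest $u,v$-path $P$ satisfies $V(P)\cap X\subseteq\{u,v\}$; $X$ is a general position set if every two vertices of $X$ are $X$-positionable; ${\rm gp}(G)$ is the maximum size of a general position set and $\#{\rm gp}(G)$ the number of general position sets of that size. *)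

theory Defs
  imports Main "HOL-Library.FuncSet"
begin

definition is_walk :: "'a set \<Rightarrow> ('a \<Rightarrow> 'a \<Rightarrow> bool) \<Rightarrow> 'a list \<Rightarrow> bool" where
  "is_walk V E P \<longleftrightarrow> P \<noteq> [] \<and> set P \<subseteq> V \<and> (\<forall>i. Suc i < length P \<longrightarrow> E (P ! i) (P ! Suc i))"

definition is_uv_walk :: "'a set \<Rightarrow> ('a \<Rightarrow> 'a \<Rightarrow> bool) \<Rightarrow> 'a \<Rightarrow> 'a \<Rightarrow> 'a list \<Rightarrow> bool" where
  "is_uv_walk V E u v P \<longleftrightarrow> is_walk V E P \<and> hd P = u \<and> last P = v"

(* shortest u,v-path: a u,v-walk of minimum length (such walks are automatically paths) *)
definition is_shortest_path :: "'a set \<Rightarrow> ('a \<Rightarrow> 'a \<Rightarrow> bool) \<Rightarrow> 'a \<Rightarrow> 'a \<Rightarrow> 'a list \<Rightarrow> bool" where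
  "is_shortest_path V E u v P \<longleftrightarrow> is_uv_walk V E u v P \<and>
     (\<forall>Q. is_uv_walk V E u v Q \<longrightarrow> length P \<le> length Q)"

definition positionable :: "'a set \<Rightarrow> ('a \<Rightarrow> 'a \<Rightarrow> bool) \<Rightarrow> 'a set \<Rightarrow> 'a \<Rightarrow> 'a \<Rightarrow> bool" where
  "positionable V E X u v \<longleftrightarrow>
     (\<forall>P. is_shortest_path V E u v P \<longrightarrow> set P \<inter> X \<subseteq> {u, v})"

definition gp_set :: "'a set \<Rightarrow> ('a \<Rightarrow> 'a \<Rightarrow> bool) \<Rightarrow> 'a set \<Rightarrow> bool" where
  "gp_set V E X \<longleftrightarrow> X \<subseteq> V \<and> (\<forall>u\<in>X. \<forall>v\<in>X. positionable V E X u v)"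

(* for finite graphs *)
definition gp_number :: "'a set \<Rightarrow> ('a \<Rightarrow> 'a \<Rightarrow> bool) \<Rightarrow> nat" where
  "gp_number V E = Max (card ` {X. gp_set V E X})"

definition gp_count :: "'a set \<Rightarrow> ('a \<Rightarrow> 'a \<Rightarrow> bool) \<Rightarrow> nat" where
  "gp_count V E = card {X. gp_set V E X \<and> card X = gp_number V E}"

definition sierp_V :: "nat \<Rightarrow> nat \<Rightarrow> nat list set" where
  "sierp_V p n = {xs. length xs = n \<and> set xs \<subseteq> {..<p}}"

(* positions are 0-based: index h here corresponds to h+1 in the paper *)
definition sierp_E :: "nat \<Rightarrow> nat \<Rightarrow> nat list \<Rightarrow> nat list \<Rightarrow> bool" where
  "sierp_E p n u v \<longleftrightarrow> u \<in> sierp_V p n \<and> v \<in> sierp_V p n \<and>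
     (\<exists>h<n. (\<forall>t<h. u ! t = v ! t) \<and> u ! h \<noteq> v ! h \<and>
            (\<forall>t. h < t \<and> t < n \<longrightarrow> u ! t = v ! h \<and> v ! t = u ! h))"

end

theory Submission
  imports Defs
begin

abbreviation "VV p \<equiv> sierp_V p 2"
abbreviation "EE p \<equiv> sierp_E p 2"

lemma len2: "length xs = 2 \<Longrightarrow> xs = [xs!0, xs!1]"
  by (cases xs; cases "tl xs"; auto)

lemma sV: "xs \<in> VV p \<longleftrightarrow> length xs = 2 \<and> xs!0 < p \<and> xs!1 < p"
proof
  assume "xs \<in> VV p"
  then have a: "length xs = 2" "set xs \<subseteq> {..<p}" unfolding sierp_V_def by auto
  then have "xs!0 \<in> set xs" "xs!1 \<in> set xs" by (simp_all add: nth_mem)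
  then show "length xs = 2 \<and> xs!0 < p \<and> xs!1 < p" using a by blast
next
  assume a: "length xs = 2 \<and> xs!0 < p \<and> xs!1 < p"
  then have "xs = [xs!0, xs!1]" using len2 by blast
  then have "set xs = {xs!0, xs!1}" by (metis list.set(1) list.simps(15))
  then show "xs \<in> VV p" using a unfolding sierp_V_def by auto
qed

lemma sV2: "[i,j] \<in> VV p \<longleftrightarrow> i < p \<and> j < p"
  by (simp add: sV)

lemma sE: "EE p u v \<longleftrightarrow> u \<in> VV p \<and> v \<in> VV p \<and>
   ((u!0 = v!0 \<and> u!1 \<noteq> v!1) \<or> (u!0 \<noteq> v!0 \<and> u!1 = v!0 \<and> v!1 = u!0))"
proof -
  have e: "(\<exists>h<(2::nat). P h) \<longleftrightarrow> P 0 \<or> P 1" for P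
    by (auto simp: less_Suc_eq numeral_2_eq_2)
  have t1: "(\<forall>t. (0::nat) < t \<and> t < 2 \<longrightarrow> Q t) \<longleftrightarrow> Q 1" for Q
    by (auto simp: less_Suc_eq numeral_2_eq_2)
  have t2: "(\<forall>t. (1::nat) < t \<and> t < 2 \<longrightarrow> Q t)" for Q
    by auto
  have t3: "(\<forall>t<(1::nat). Q t) \<longleftrightarrow> Q 0" for Q by auto
  show ?thesis unfolding sierp_E_def e t1 t3 using t2 by auto
qed

definition fd :: "nat list \<Rightarrow> nat list \<Rightarrow> nat" where
  "fd u v = (if u!0 = v!0 then (if u!1 = v!1 then 0 else 1)
     else (if u!1 = v!0 then 0 else 1) + 1 + (if v!1 = u!0 then 0 else 1))"

lemma fd_lip: "EE p u v \<Longrightarrow> fd u w \<le> Suc (fd v w)"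
  by (auto simp: sE fd_def)

lemma walk_Cons2: "is_walk (VV p) (EE p) (x#y#r) \<longleftrightarrow> EE p x y \<and> is_walk (VV p) (EE p) (y#r)"
proof
  assume a: "is_walk (VV p) (EE p) (x#y#r)"
  have s: "set (x#y#r) \<subseteq> (VV p)" and al: "\<forall>i. Suc i < length (x#y#r) \<longrightarrow> (EE p) ((x#y#r) ! i) ((x#y#r) ! Suc i)"
    using a unfolding is_walk_def by blast+
  have "EE p x y" using al[rule_format, of 0] by simp
  moreover have "\<forall>i. Suc i < length (y#r) \<longrightarrow> (EE p) ((y#r) ! i) ((y#r) ! Suc i)"
  proof (intro allI impI)
    fix i assume "Suc i < length (y#r)"
    then have "Suc (Suc i) < length (x#y#r)" by simp
    from al[rule_format, OF this] show "EE p ((y # r) ! i) ((y # r) ! Suc i)" by simp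
  qed
  moreover have "set (y#r) \<subseteq> (VV p)" using s by simp
  ultimately show "EE p x y \<and> is_walk (VV p) (EE p) (y#r)" unfolding is_walk_def by blast
next
  assume a: "EE p x y \<and> is_walk (VV p) (EE p) (y#r)"
  have s: "set (y#r) \<subseteq> (VV p)" and al: "\<forall>i. Suc i < length (y#r) \<longrightarrow> (EE p) ((y#r) ! i) ((y#r) ! Suc i)"
    using a unfolding is_walk_def by blast+
  have "x \<in> VV p" using a sE by blast
  have al2: "\<forall>i. Suc i < length (x#y#r) \<longrightarrow> EE p ((x#y#r) ! i) ((x#y#r) ! Suc i)"
  proof (intro allI impI)
    fix i assume i: "Suc i < length (x#y#r)"
    show "EE p ((x#y#r) ! i) ((x#y#r) ! Suc i)"
    proof (cases i)
      case 0 then show ?thesis using a by simp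
    next
      case (Suc m)
      then have "Suc m < length (y#r)" using i by simp
      from al[rule_format, OF this] show ?thesis using Suc by simp
    qed
  qed
  show "is_walk (VV p) (EE p) (x#y#r)" unfolding is_walk_def using al2 s \<open>x \<in> VV p\<close> by simp
qed

lemma walk_1: "is_walk V E [x] \<longleftrightarrow> x \<in> V"
  by (auto simp: is_walk_def)

lemma fd_self: "fd u u = 0" by (simp add: fd_def)

lemma fd_walk: "is_walk (VV p) (EE p) P \<Longrightarrow> fd (hd P) (last P) < length P"
proof (induction P)
  case Nil then show ?case by (simp add: is_walk_def)
next
  case (Cons x Q)
  show ?case
  proof (cases Q)
    case Nil then show ?thesis by (simp add: fd_self)
  next
    case (Cons y r)
    have "EE p x y" "is_walk (VV p) (EE p) Q" using Cons.prems Cons walk_Cons2 by metis+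
    then have "fd y (last Q) < length Q" using Cons.IH Cons by simp
    moreover have "fd x (last Q) \<le> Suc (fd y (last Q))" using fd_lip[OF \<open>EE p x y\<close>] .
    ultimately show ?thesis using Cons by simp
  qed
qed

lemma walk_exists:
  assumes "i<p" "j<p" "k<p" "l<p"
  shows "\<exists>Q. is_uv_walk (VV p) (EE p) [i,j] [k,l] Q \<and> length Q = Suc (fd [i,j] [k,l])"
proof (cases "i = k")
  case True
  show ?thesis
  proof (cases "j = l")
    case True
    show ?thesis using assms \<open>i = k\<close> True
      by (intro exI[of _ "[[i,j]]"]) (simp add: is_uv_walk_def walk_1 sV2 fd_def)
  next
    case False
    show ?thesis using assms \<open>i = k\<close> False
      by (intro exI[of _ "[[i,j],[k,l]]"]) (simp add: is_uv_walk_def walk_Cons2 walk_1 sV2 sE fd_def)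
  qed
next
  case ik: False
  show ?thesis
  proof (cases "j = k")
    case jk: True
    show ?thesis
    proof (cases "l = i")
      case True
      show ?thesis using assms ik jk True
        by (intro exI[of _ "[[i,j],[k,i]]"]) (simp add: is_uv_walk_def walk_Cons2 walk_1 sV2 sE fd_def)
    next
      case False
      show ?thesis using assms ik jk False
        by (intro exI[of _ "[[i,j],[k,i],[k,l]]"]) (simp add: is_uv_walk_def walk_Cons2 walk_1 sV2 sE fd_def)
    qed
  next
    case jk: False
    show ?thesis
    proof (cases "l = i")
      case True
      show ?thesis using assms ik jk True
        by (intro exI[of _ "[[i,j],[i,k],[k,i]]"]) (simp add: is_uv_walk_def walk_Cons2 walk_1 sV2 sE fd_def)
    next
      case False
      show ?thesis using assms ik jk False
        by (intro exI[of _ "[[i,j],[i,k],[k,i],[k,l]]"]) (simp add: is_uv_walk_def walk_Cons2 walk_1 sV2 sE fd_def)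
    qed
  qed
qed

lemma walk_exists':
  assumes "u \<in> VV p" "v \<in> VV p"
  shows "\<exists>Q. is_uv_walk (VV p) (EE p) u v Q \<and> length Q = Suc (fd u v)"
proof -
  have "u = [u!0,u!1]" "v = [v!0,v!1]" using assms len2 sV by blast+
  then show ?thesis using walk_exists[of "u!0" p "u!1" "v!0" "v!1"] assms sV by metis
qed

lemma shortest_of:
  "is_uv_walk (VV p) (EE p) u v P \<Longrightarrow> length P = Suc (fd u v) \<Longrightarrow> is_shortest_path (VV p) (EE p) u v P"
  unfolding is_shortest_path_def
  using fd_walk unfolding is_uv_walk_def by (metis Suc_leI)

lemma shortest_len:
  assumes "is_shortest_path (VV p) (EE p) u v P" "u \<in> VV p" "v \<in> VV p"
  shows "length P = Suc (fd u v)"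
proof -
  obtain Q where Q: "is_uv_walk (VV p) (EE p) u v Q" "length Q = Suc (fd u v)"
    using walk_exists'[OF assms(2,3)] by blast
  have "length P \<le> length Q" using assms(1) Q(1) unfolding is_shortest_path_def by blast
  moreover have "fd u v < length P" using assms(1) fd_walk unfolding is_shortest_path_def is_uv_walk_def
    by metis
  ultimately show ?thesis using Q(2) by simp
qed

lemma walk_take_drop:
  assumes "is_walk V E P" "m < length P"
  shows "is_walk V E (take (Suc m) P)" "is_walk V E (drop m P)"
  using assms unfolding is_walk_def
  by (auto dest: in_set_takeD in_set_dropD)

lemma on_path:
  assumes "is_shortest_path (VV p) (EE p) u v P" "u \<in> VV p" "v \<in> VV p" "w \<in> set P"
  shows "fd u w + fd w v \<le> fd u v"
proof -
  have L: "length P = Suc (fd u v)" using shortest_len assms by blast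
  have W: "is_walk (VV p) (EE p) P" "hd P = u" "last P = v"
    using assms(1) unfolding is_shortest_path_def is_uv_walk_def by auto
  obtain m where m: "m < length P" "P ! m = w" using assms(4) by (metis in_set_conv_nth)
  have P0: "P \<noteq> []" using m by auto
  have "fd (hd (take (Suc m) P)) (last (take (Suc m) P)) < length (take (Suc m) P)"
    using fd_walk walk_take_drop(1)[OF W(1) m(1)] by blast
  moreover have "hd (take (Suc m) P) = u" using W P0 by simp
  moreover have "last (take (Suc m) P) = w"
  proof -
    have lt: "length (take (Suc m) P) = Suc m" using m by simp
    then have "take (Suc m) P \<noteq> []" by auto
    then have "last (take (Suc m) P) = take (Suc m) P ! (length (take (Suc m) P) - 1)" by (rule last_conv_nth)
    then show ?thesis using lt m by simp
  qed
  ultimately have 1: "fd u w < Suc m" using m by simp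
  have "fd (hd (drop m P)) (last (drop m P)) < length (drop m P)"
    using fd_walk walk_take_drop(2)[OF W(1) m(1)] by blast
  moreover have "hd (drop m P) = w" using m by (simp add: hd_drop_conv_nth)
  moreover have "last (drop m P) = v" using m W by simp
  ultimately have 2: "fd w v < length P - m" by simp
  show ?thesis using 1 2 L m by linarith
qed


definition XA :: "nat \<Rightarrow> nat set \<Rightarrow> nat list set" where
  "XA p A = {xs. length xs = 2 \<and> xs!0 \<in> A \<and> xs!1 < p \<and> (xs!1 \<notin> A \<or> xs!1 = xs!0)}"

lemma XA_sub: "A \<subseteq> {..<p} \<Longrightarrow> XA p A \<subseteq> VV p"
  by (auto simp: XA_def sV)

lemma fd_XA:
  assumes "x \<in> XA p A" "y \<in> XA p A"
  shows "fd x y = (if x = y then 0 else if x!0 = y!0 then 1 else 3)"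
proof -
  have x: "x = [x!0,x!1]" and y: "y = [y!0,y!1]" using assms len2 unfolding XA_def by blast+
  have "x = y \<longleftrightarrow> x!0 = y!0 \<and> x!1 = y!1" using x y by (metis nth_Cons_0 nth_Cons_Suc One_nat_def)
  then show ?thesis using assms unfolding fd_def XA_def by auto
qed

lemma XA_gp:
  assumes A: "A \<subseteq> {..<p}"
  shows "gp_set (VV p) (EE p) (XA p A)"
  unfolding gp_set_def positionable_def
proof (intro conjI ballI allI impI subsetI)
  show "x \<in> VV p" if "x \<in> XA p A" for x using XA_sub[OF A] that by blast
next
  fix u v P w
  assume u: "u \<in> XA p A" and v: "v \<in> XA p A" and P: "is_shortest_path (VV p) (EE p) u v P"
    and w: "w \<in> set P \<inter> XA p A"
  have uV: "u \<in> VV p" and vV: "v \<in> VV p" using u v XA_sub[OF A] by blast+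
  have le: "fd u w + fd w v \<le> fd u v" using on_path[OF P uV vV] w by blast
  have wX: "w \<in> XA p A" using w by blast
  show "w \<in> {u, v}"
  proof (rule ccontr)
    assume "w \<notin> {u,v}"
    then have "w \<noteq> u" "w \<noteq> v" by auto
    then show False using le fd_XA[OF u wX] fd_XA[OF wX v] fd_XA[OF u v]
      by (auto split: if_splits)
  qed
qed

lemma key:
  assumes gp: "gp_set (VV p) (EE p) X" and X: "[i,j]\<in>X" "[k,l]\<in>X" "[i,k]\<in>X" and ik: "i\<noteq>k"
  shows "j = k"
proof (rule ccontr)
  assume jk: "j \<noteq> k"
  have XV: "X \<subseteq> VV p" using gp unfolding gp_set_def by blast
  have lt: "i<p" "j<p" "k<p" "l<p" using X XV sV2 by blast+
  define P where "P = [[i,j],[i,k],[k,i]] @ (if l = i then [] else [[k,l]])"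
  have "is_uv_walk (VV p) (EE p) [i,j] [k,l] P \<and> length P = Suc (fd [i,j] [k,l])"
    using lt jk ik
    by (cases "l = i") (simp_all add: P_def is_uv_walk_def walk_Cons2 walk_1 sV2 sE fd_def)
  then have "is_shortest_path (VV p) (EE p) [i,j] [k,l] P" using shortest_of by blast
  then have "set P \<inter> X \<subseteq> {[i,j],[k,l]}" using gp X unfolding gp_set_def positionable_def by blast
  moreover have "[i,k] \<in> set P" by (simp add: P_def)
  ultimately show False using jk ik X by auto
qed

definition Xi :: "nat list set \<Rightarrow> nat \<Rightarrow> nat set" where
  "Xi X i = {j. [i,j] \<in> X}"
definition AX :: "nat list set \<Rightarrow> nat set" where
  "AX X = {i. \<exists>j. [i,j] \<in> X}"

lemma AX_sub: "X \<subseteq> VV p \<Longrightarrow> AX X \<subseteq> {..<p}"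
  unfolding AX_def using sV2 by blast
lemma Xi_sub: "X \<subseteq> VV p \<Longrightarrow> Xi X i \<subseteq> {..<p}"
  unfolding Xi_def using sV2 by blast

lemma decomp:
  assumes "X \<subseteq> VV p"
  shows "X = (\<lambda>(i,j). [i,j]) ` Sigma (AX X) (Xi X)"
proof
  show "X \<subseteq> (\<lambda>(i,j). [i,j]) ` Sigma (AX X) (Xi X)"
  proof
    fix x assume x: "x \<in> X"
    then have xx: "x = [x!0,x!1]" using assms len2 sV by blast
    then have m: "[x!0,x!1] \<in> X" using x by simp
    then have "(x!0, x!1) \<in> Sigma (AX X) (Xi X)" unfolding AX_def Xi_def by blast
    then show "x \<in> (\<lambda>(i,j). [i,j]) ` Sigma (AX X) (Xi X)" using xx
      by (intro image_eqI[of _ _ "(x!0,x!1)"]) auto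
  qed
qed (auto simp: AX_def Xi_def)

lemma inj_pair: "inj_on (\<lambda>(i::nat,j::nat). [i,j]) S"
  by (auto simp: inj_on_def)

lemma card_decomp:
  assumes "X \<subseteq> VV p"
  shows "card X = (\<Sum>i\<in>AX X. card (Xi X i))"
proof -
  have f: "finite (AX X)" "\<forall>i\<in>AX X. finite (Xi X i)"
    using AX_sub[OF assms] Xi_sub[OF assms] finite_subset by blast+
  have "card X = card (Sigma (AX X) (Xi X))"
    by (subst decomp[OF assms]) (rule card_image[OF inj_pair])
  also have "\<dots> = (\<Sum>i\<in>AX X. card (Xi X i))" using f by simp
  finally show ?thesis .
qed

lemma card_compl:
  assumes "A \<subseteq> {..<p}" "i \<in> A"
  shows "card (insert i ({..<p} - A)) = p + 1 - card A"
proof -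
  have "finite A" using assms finite_subset by blast
  have "card A \<le> p" using assms card_mono[of "{..<p}" A] by simp
  moreover have "card ({..<p} - A) = p - card A" using assms by (simp add: card_Diff_subset \<open>finite A\<close>)
  ultimately show ?thesis using assms by simp
qed

lemma Xi_bound:
  assumes gp: "gp_set (VV p) (EE p) X" and i: "i \<in> AX X"
  shows "card (Xi X i) \<le> p + 1 - card (AX X)"
    "2 \<le> card (Xi X i) \<Longrightarrow> Xi X i \<subseteq> insert i ({..<p} - AX X)"
proof -
  have XV: "X \<subseteq> VV p" using gp unfolding gp_set_def by blast
  have fin: "finite (Xi X i)" using Xi_sub[OF XV] finite_subset by blast
  have cA: "card (AX X) \<le> p" using AX_sub[OF XV] card_mono[of "{..<p}" "AX X"] by simp
  show sub: "Xi X i \<subseteq> insert i ({..<p} - AX X)" if c2: "2 \<le> card (Xi X i)"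
  proof
    fix j assume j: "j \<in> Xi X i"
    have jp: "j < p" using j Xi_sub[OF XV] by blast
    show "j \<in> insert i ({..<p} - AX X)"
    proof (rule ccontr)
      assume "j \<notin> insert i ({..<p} - AX X)"
      then have jA: "j \<in> AX X" "j \<noteq> i" using jp by auto
      then obtain l where l: "[j,l] \<in> X" unfolding AX_def by blast
      have "Xi X i \<subseteq> {j}"
      proof
        fix j' assume "j' \<in> Xi X i"
        then have "j' = j" using key[OF gp _ l, of i j'] j jA unfolding Xi_def by auto
        then show "j' \<in> {j}" by simp
      qed
      then have "card (Xi X i) \<le> 1" using card_mono[of "{j}"] by simp
      then show False using c2 by simp
    qed
  qed
  show "card (Xi X i) \<le> p + 1 - card (AX X)"
  proof (cases "2 \<le> card (Xi X i)")
    case True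
    have "card (Xi X i) \<le> card (insert i ({..<p} - AX X))"
      using sub[OF True] by (intro card_mono) auto
    also have "\<dots> = p + 1 - card (AX X)" using card_compl AX_sub[OF XV] i by blast
    finally show ?thesis .
  next
    case False then show ?thesis using cA by simp
  qed
qed

definition Mp :: "nat \<Rightarrow> nat" where
  "Mp p = (if odd p then (p + 1)^2 div 4 else p * (p + 2) div 4)"
definition good :: "nat \<Rightarrow> nat \<Rightarrow> bool" where
  "good p a = (if odd p then a = (p+1) div 2 else a = p div 2 \<or> a = p div 2 + 1)"

lemma arith_odd:
  fixes a b q :: nat assumes "a + b = 2*q+2"
  shows "a*b \<le> (q+1)^2 \<and> (a*b = (q+1)^2 \<longleftrightarrow> a = q+1)"
proof -
  have i: "int a + int b = 2*int q + 2" using assms by linarith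
  have sq: "(int a - int b)^2 \<ge> 0" by simp
  have e1: "(int a + int b)^2 = 4*(int a*int b) + (int a - int b)^2"
    by (simp add: power2_eq_square algebra_simps)
  have e2: "(int a + int b)^2 = 4*(int q+1)^2" unfolding i by (simp add: power2_eq_square algebra_simps)
  have "int a * int b \<le> (int q + 1)^2" using e1 e2 sq by linarith
  then have 1: "a*b \<le> (q+1)^2" by (metis of_nat_1 of_nat_add of_nat_le_iff of_nat_mult of_nat_power)
  have 2: "a = q+1" if "a*b = (q+1)^2"
  proof -
    have "int a * int b = (int q + 1)^2" using that by (metis of_nat_1 of_nat_add of_nat_mult of_nat_power)
    then have "(int a - int b)^2 = 0" using e1 e2 by linarith
    then have "int a = int b" by simp
    then show ?thesis using i by linarith
  qed
  have 3: "a*b = (q+1)^2" if "a = q+1"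
  proof -
    have "b = q+1" using that assms by linarith
    then show ?thesis using that by (simp add: power2_eq_square)
  qed
  show ?thesis using 1 2 3 by blast
qed

lemma arith_even:
  fixes a b q :: nat assumes "a + b = 2*q+1"
  shows "a*b \<le> q*(q+1) \<and> (a*b = q*(q+1) \<longleftrightarrow> a = q \<or> a = q+1)"
proof -
  have i: "int a + int b = 2*int q + 1" using assms by linarith
  have ne: "int a - int b \<noteq> 0" using i by presburger
  then have sq: "(int a - int b)^2 > 0" by simp
  have e1: "(int a + int b)^2 = 4*(int a*int b) + (int a - int b)^2"
    by (simp add: power2_eq_square algebra_simps)
  have e2: "(int a + int b)^2 = 4*(int q*(int q+1)) + 1" unfolding i by (simp add: power2_eq_square algebra_simps)
  have "int a * int b \<le> int q * (int q + 1)" using e1 e2 sq by linarith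
  then have 1: "a*b \<le> q*(q+1)" by (metis of_nat_1 of_nat_add of_nat_le_iff of_nat_mult)
  have 2: "a = q \<or> a = q+1" if "a*b = q*(q+1)"
  proof -
    have "int a * int b = int q * (int q + 1)" using that by (metis of_nat_1 of_nat_add of_nat_mult)
    then have "(int a - int b)^2 = 1" using e1 e2 by linarith
    then have "int a - int b = 1 \<or> int a - int b = -1" using power2_eq_1_iff by blast
    then show ?thesis using i by linarith
  qed
  have 3: "a*b = q*(q+1)" if "a = q \<or> a = q+1"
  proof -
    have "(a = q \<and> b = q+1) \<or> (a = q+1 \<and> b = q)" using that assms by linarith
    then show ?thesis by auto
  qed
  show ?thesis using 1 2 3 by blast
qed

lemma arith:
  fixes a p :: nat assumes "a \<le> p"
  shows "a*(p+1-a) \<le> Mp p \<and> (a*(p+1-a) = Mp p \<longleftrightarrow> good p a)"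
proof (cases "odd p")
  case True
  then obtain q where q: "p = 2*q+1" by (metis oddE)
  have "(p+1)^2 = 4*(q+1)^2" unfolding q by (simp add: power2_eq_square algebra_simps)
  then have M: "Mp p = (q+1)^2" using True by (simp add: Mp_def)
  have g: "good p a \<longleftrightarrow> a = q+1" using True q by (simp add: good_def)
  have "a + (p+1-a) = 2*q+2" using assms q by simp
  from arith_odd[OF this] show ?thesis using M g by simp
next
  case False
  then obtain q where q: "p = 2*q" by (metis evenE)
  have "p*(p+2) = 4*(q*(q+1))" unfolding q by (simp add: algebra_simps)
  then have M: "Mp p = q*(q+1)" using False by (simp add: Mp_def)
  have g: "good p a \<longleftrightarrow> a = q \<or> a = q+1" using False q by (simp add: good_def)
  have "a + (p+1-a) = 2*q+1" using assms q by simp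
  from arith_even[OF this] show ?thesis using M g by simp
qed

lemma ub:
  assumes gp: "gp_set (VV p) (EE p) X" and p3: "p \<ge> 3"
  shows "card X \<le> Mp p" "card X = Mp p \<Longrightarrow> X = XA p (AX X) \<and> good p (card (AX X))"
proof -
  have XV: "X \<subseteq> VV p" using gp unfolding gp_set_def by blast
  define a where "a = card (AX X)"
  define b where "b = p + 1 - a"
  have finA: "finite (AX X)" using AX_sub[OF XV] finite_subset by blast
  have ap: "a \<le> p" unfolding a_def using AX_sub[OF XV] card_mono[of "{..<p}" "AX X"] by simp
  have le_i: "\<forall>i\<in>AX X. card (Xi X i) \<le> b" using Xi_bound(1)[OF gp] unfolding b_def a_def by blast
  have "card X = (\<Sum>i\<in>AX X. card (Xi X i))" using card_decomp[OF XV] .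
  also have s: "\<dots> \<le> (\<Sum>i\<in>AX X. b)" using le_i by (intro sum_mono) auto
  also have "\<dots> = a * b" unfolding a_def by simp
  finally have cab: "card X \<le> a * b" .
  have abM: "a * b \<le> Mp p" using arith[OF ap] unfolding b_def by blast
  show "card X \<le> Mp p" using cab abM by linarith
  assume eq: "card X = Mp p"
  have abeq: "a * b = Mp p" using cab abM eq by linarith
  then have gd: "good p a" using arith[OF ap] unfolding b_def by blast
  have b2: "b \<ge> 2"
  proof (cases "odd p")
    case True
    then have "a = (p+1) div 2" using gd unfolding good_def by simp
    then show ?thesis using p3 unfolding b_def by presburger
  next
    case False
    then have "a = p div 2 \<or> a = p div 2 + 1" using gd unfolding good_def by simp
    then show ?thesis using p3 False unfolding b_def by presburger
  qed
  have all: "\<forall>i\<in>AX X. card (Xi X i) = b"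
  proof (rule ccontr)
    assume "\<not> (\<forall>i\<in>AX X. card (Xi X i) = b)"
    then obtain i0 where "i0 \<in> AX X" "card (Xi X i0) \<noteq> b" by blast
    then have ex: "\<exists>i\<in>AX X. card (Xi X i) < b" using le_i le_neq_implies_less by blast
    have "(\<Sum>i\<in>AX X. card (Xi X i)) < (\<Sum>i\<in>AX X. b)"
      using sum_strict_mono_ex1[of "AX X" "\<lambda>i. card (Xi X i)" "\<lambda>i. b", OF finA le_i ex] .
    then have "card X < a * b" using card_decomp[OF XV] unfolding a_def by simp
    then show False using abeq eq by simp
  qed
  have XiEq: "Xi X i = insert i ({..<p} - AX X)" if i: "i \<in> AX X" for i
  proof (rule card_subset_eq)
    show "finite (insert i ({..<p} - AX X))" by simp
    show "Xi X i \<subseteq> insert i ({..<p} - AX X)" using Xi_bound(2)[OF gp i] all i b2 by simp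
    show "card (Xi X i) = card (insert i ({..<p} - AX X))"
      using all i card_compl[OF AX_sub[OF XV] i] unfolding b_def a_def by simp
  qed
  have "X = XA p (AX X)"
  proof
    show "X \<subseteq> XA p (AX X)"
    proof
      fix x assume x: "x \<in> X"
      then have xx: "x = [x!0,x!1]" using XV len2 sV by blast
      then have "x!0 \<in> AX X" "x!1 \<in> Xi X (x!0)" using x unfolding AX_def Xi_def by (metis mem_Collect_eq)+
      then have "x!1 \<in> insert (x!0) ({..<p} - AX X)" using XiEq by blast
      moreover have "length x = 2" using x XV sV by blast
      ultimately show "x \<in> XA p (AX X)" using \<open>x!0 \<in> AX X\<close> AX_sub[OF XV] unfolding XA_def by auto
    qed
  next
    show "XA p (AX X) \<subseteq> X"
    proof
      fix x assume x: "x \<in> XA p (AX X)"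
      then have xx: "x = [x!0,x!1]" using len2 unfolding XA_def by blast
      have "x!0 \<in> AX X" "x!1 \<in> insert (x!0) ({..<p} - AX X)" using x unfolding XA_def by auto
      then have "x!1 \<in> Xi X (x!0)" using XiEq by blast
      then show "x \<in> X" using xx unfolding Xi_def by (metis mem_Collect_eq)
    qed
  qed
  then show "X = XA p (AX X) \<and> good p (card (AX X))" using gd unfolding a_def by blast
qed

lemma card_XA:
  assumes A: "A \<subseteq> {..<p}"
  shows "card (XA p A) = card A * (p + 1 - card A)"
proof -
  have e: "XA p A = (\<lambda>(i,j). [i,j]) ` Sigma A (\<lambda>i. insert i ({..<p} - A))"
  proof
    show "XA p A \<subseteq> (\<lambda>(i,j). [i,j]) ` Sigma A (\<lambda>i. insert i ({..<p} - A))"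
    proof
      fix x assume x: "x \<in> XA p A"
      then have xx: "x = [x!0,x!1]" using len2 unfolding XA_def by blast
      show "x \<in> (\<lambda>(i,j). [i,j]) ` Sigma A (\<lambda>i. insert i ({..<p} - A))"
        using x by (intro image_eqI[of _ _ "(x!0,x!1)"]) (use xx in \<open>auto simp: XA_def\<close>)
    qed
    show "(\<lambda>(i,j). [i,j]) ` Sigma A (\<lambda>i. insert i ({..<p} - A)) \<subseteq> XA p A"
      using A by (auto simp: XA_def)
  qed
  have finA: "finite A" using A finite_subset by blast
  have "card (XA p A) = card (Sigma A (\<lambda>i. insert i ({..<p} - A)))"
    by (subst e) (rule card_image[OF inj_pair])
  also have "\<dots> = (\<Sum>i\<in>A. card (insert i ({..<p} - A)))" using finA by simp
  also have "\<dots> = (\<Sum>i\<in>A. p + 1 - card A)" using card_compl[OF A] by simp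
  also have "\<dots> = card A * (p + 1 - card A)" by simp
  finally show ?thesis .
qed

lemma XA_diag: "A \<subseteq> {..<p} \<Longrightarrow> [i,i] \<in> XA p A \<longleftrightarrow> i \<in> A"
  by (auto simp: XA_def)

lemma XA_inj: "inj_on (XA p) {A. A \<subseteq> {..<p}}"
proof (rule inj_onI)
  fix A B assume A: "A \<in> {A. A \<subseteq> {..<p}}" and B: "B \<in> {A. A \<subseteq> {..<p}}" and e: "XA p A = XA p B"
  show "A = B" using XA_diag[of A p] XA_diag[of B p] A B e by blast
qed

lemma finite_VV: "finite (VV p)"
proof -
  have "VV p = {xs. set xs \<subseteq> {..<p} \<and> length xs = 2}" unfolding sierp_V_def by auto
  then show ?thesis using finite_lists_length_eq[of "{..<p}" 2] by simp
qed

theorem corollary3p2: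
  fixes p :: nat
  assumes "p \<ge> 3"
  shows "gp_number (sierp_V p 2) (sierp_E p 2) =
           (if odd p then (p + 1)^2 div 4 else p * (p + 2) div 4)
       \<and> gp_count (sierp_V p 2) (sierp_E p 2) =
           (if odd p then p choose ((p + 1) div 2) else (p + 1) choose ((p + 2) div 2))"
proof -
  let ?S = "{X. gp_set (VV p) (EE p) X}"
  have finS: "finite ?S"
    by (rule finite_subset[of _ "Pow (VV p)"]) (auto simp: gp_set_def finite_VV)
  define A0 where "A0 = {..<(p+1) div 2}"
  have A0s: "A0 \<subseteq> {..<p}" unfolding A0_def using assms by auto
  have cA0: "card A0 = (p+1) div 2" unfolding A0_def by simp
  have gA0: "good p (card A0)" unfolding cA0 good_def by presburger
  have cXA0: "card (XA p A0) = Mp p"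
    using card_XA[OF A0s] arith[of "card A0" p] gA0 A0s card_mono[of "{..<p}" A0] by simp
  have gn: "gp_number (VV p) (EE p) = Mp p"
    unfolding gp_number_def
  proof (rule Max_eqI)
    show "finite (card ` ?S)" using finS by simp
    show "y \<le> Mp p" if "y \<in> card ` ?S" for y using that ub(1)[OF _ assms] by blast
    show "Mp p \<in> card ` ?S" using cXA0 XA_gp[OF A0s] by (intro image_eqI[of _ _ "XA p A0"]) auto
  qed
  have cnt_set: "{X. gp_set (VV p) (EE p) X \<and> card X = gp_number (VV p) (EE p)}
      = XA p ` {A. A \<subseteq> {..<p} \<and> good p (card A)}"
  proof
    show "{X. gp_set (VV p) (EE p) X \<and> card X = gp_number (VV p) (EE p)}
      \<subseteq> XA p ` {A. A \<subseteq> {..<p} \<and> good p (card A)}"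
    proof
      fix X assume "X \<in> {X. gp_set (VV p) (EE p) X \<and> card X = gp_number (VV p) (EE p)}"
      then have gX: "gp_set (VV p) (EE p) X" and cX: "card X = Mp p" using gn by auto
      have "X \<subseteq> VV p" using gX unfolding gp_set_def by blast
      then show "X \<in> XA p ` {A. A \<subseteq> {..<p} \<and> good p (card A)}"
        using ub(2)[OF gX assms cX] AX_sub by blast
    qed
    show "XA p ` {A. A \<subseteq> {..<p} \<and> good p (card A)}
      \<subseteq> {X. gp_set (VV p) (EE p) X \<and> card X = gp_number (VV p) (EE p)}"
    proof
      fix X assume "X \<in> XA p ` {A. A \<subseteq> {..<p} \<and> good p (card A)}"
      then obtain A where A: "A \<subseteq> {..<p}" "good p (card A)" and X: "X = XA p A" by blast
      have "card A \<le> p" using A card_mono[of "{..<p}" A] by simp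
      then have "card X = Mp p" using card_XA[OF A(1)] arith[of "card A" p] A X by simp
      then show "X \<in> {X. gp_set (VV p) (EE p) X \<and> card X = gp_number (VV p) (EE p)}"
        using XA_gp[OF A(1)] X gn by simp
    qed
  qed
  have inj: "inj_on (XA p) {A. A \<subseteq> {..<p} \<and> good p (card A)}"
    using XA_inj by (rule inj_on_subset) auto
  have gc: "gp_count (VV p) (EE p) = card {A. A \<subseteq> {..<p} \<and> good p (card A)}"
    unfolding gp_count_def cnt_set using card_image[OF inj] .
  have cc: "card {A. A \<subseteq> {..<p} \<and> good p (card A)} =
      (if odd p then p choose ((p + 1) div 2) else (p + 1) choose ((p + 2) div 2))"
  proof (cases "odd p")
    case True
    then have "{A. A \<subseteq> {..<p} \<and> good p (card A)} = {A. A \<subseteq> {..<p} \<and> card A = (p+1) div 2}"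
      by (simp add: good_def)
    then show ?thesis using True n_subsets[of "{..<p}" "(p+1) div 2"] by simp
  next
    case False
    then obtain q where q: "p = 2*q" by (metis evenE)
    have e: "{A. A \<subseteq> {..<p} \<and> good p (card A)} =
        {A. A \<subseteq> {..<p} \<and> card A = q} \<union> {A. A \<subseteq> {..<p} \<and> card A = Suc q}"
      using False q by (auto simp: good_def)
    have "card ({A. A \<subseteq> {..<p} \<and> card A = q} \<union> {A. A \<subseteq> {..<p} \<and> card A = Suc q})
        = card {A. A \<subseteq> {..<p} \<and> card A = q} + card {A. A \<subseteq> {..<p} \<and> card A = Suc q}"
      by (rule card_Un_disjoint) (auto intro: finite_subset[of _ "Pow {..<p}"])
    also have "\<dots> = (p choose q) + (p choose Suc q)" using n_subsets[of "{..<p}"] by simp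
    also have "\<dots> = Suc p choose Suc q" by simp
    finally show ?thesis using e False q by simp
  qed
  show ?thesis using gn gc cc unfolding Mp_def by simp
qed

end
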